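(* Let $(V,S)$ be a pair of adapted processes $V=(V_t)_{t\in\mathbb{T}}$, $S=(S_t)_{t\in\mathbb{T}\cup\{T\}}$ satisfying properties (i)–(iii) below. Then for every $t\in\mathbb{T}$, on the set $\{t<T_e\}\cap\{V_t>G_t\}$ we have $S_t=E[S_{t+1}\mid\mathcal{F}_t]$ and $S_tV_t=E[S_{t+1}V_{t+1}\mid\mathcal{F}_t]$. (i) $0<S_t\le1$ on $D_t$ and $S_t=0$ on $D_t^c$ for all $t\in\mathbb{T}$, and $V_t=G_t$ on $\{t\ge T_e\}$. (ii) Given $S$, $V$ is the smallest adapted process which dominates $G$ and renders the stopped process $(S_{t\wedge T_e}V_{t\wedge T_e})_{t\in\mathbb{T}}$ a supermartingale. (iii) Given $V$, $S$ is the smallest nonnegative supermartingale on $\mathbb{T}\cup\{T\}$ satisfying $S_t=1$ on $D_t\cap\{V_t=G_t\}$ for all $t\in\mathbb{T}$, and $S_\infty=1_{\{\sigma=\infty\}}$ if $T=\infty$.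
   Context: Let $T\in\mathbb{N}\cup\{\infty\}$, $\mathbb{T}=\{0,\dots,T\}$ if $T<\infty$ and $\mathbb{T}=\{0,1,2,\dots\}$ if $T=\infty$ (supermartingale properties are understood on $\mathbb{T}$ unless stated otherwise). Let $(\Omega,\mathcal{F},P)$ be a probability space with filtration $(\mathcal{F}_t)_{t\le T}$, $\mathcal{F}_0$ trivial. Let $\sigma$ be a stopping time with values in $\{0,1,\dots\}\cup\{\infty\}$, $P(\sigma>0)=1$; $D_t=\{t<\sigma\}$, $D_\infty=\{\sigma=\infty\}$. Let $G=(G_t)_{t\in\mathbb{T}\cup\{T\}}$ be adapted, with $G_t=\Delta$ on $D_t^c$ ($\Delta$ an auxiliary symbol with $0\cdot\Delta=0$), $E[\sup_{t\le T}|G_t|1_{D_t}]<\infty$, and if $T=\infty$, $G_\infty=\limsup_{t\to\infty}G_t$. Effective horizon: $T_e=T\wedge\inf\{0\le t<T:P(D_{t+1}\mid\mathcal{F}_t)=0\}$, with $\inf\emptyset=\infty$. *)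

theory Defs
  imports "HOL-Probability.Probability"
begin

definition time_set :: "enat \<Rightarrow> enat set" where
  "time_set T = {t. t \<le> T \<and> t \<noteq> \<infinity>}"

definition time_set_T :: "enat \<Rightarrow> enat set" where
  "time_set_T T = {t. t \<le> T}"

definition filtration_on :: "'a measure \<Rightarrow> (enat \<Rightarrow> 'a measure) \<Rightarrow> enat set \<Rightarrow> bool" where
  "filtration_on M F I \<longleftrightarrow>
     (\<forall>t\<in>I. subalgebra M (F t)) \<and>
     (\<forall>s\<in>I. \<forall>t\<in>I. s \<le> t \<longrightarrow> sets (F s) \<subseteq> sets (F t))"

definition adapted_on :: "(enat \<Rightarrow> 'a measure) \<Rightarrow> enat set \<Rightarrow> (enat \<Rightarrow> 'a \<Rightarrow> real) \<Rightarrow> bool" where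
  "adapted_on F I X \<longleftrightarrow> (\<forall>t\<in>I. X t \<in> borel_measurable (F t))"

definition supermartingale_on ::
  "'a measure \<Rightarrow> (enat \<Rightarrow> 'a measure) \<Rightarrow> enat set \<Rightarrow> (enat \<Rightarrow> 'a \<Rightarrow> real) \<Rightarrow> bool" where
  "supermartingale_on M F I X \<longleftrightarrow>
     adapted_on F I X \<and> (\<forall>t\<in>I. integrable M (X t)) \<and>
     (\<forall>s\<in>I. \<forall>t\<in>I. s \<le> t \<longrightarrow>
        (AE \<omega> in M. real_cond_exp M (F s) (X t) \<omega> \<le> X s \<omega>))"

definition Dset :: "'a measure \<Rightarrow> ('a \<Rightarrow> enat) \<Rightarrow> enat \<Rightarrow> 'a set" where
  "Dset M \<sigma> t = {\<omega> \<in> space M. if t = \<infinity> then \<sigma> \<omega> = \<infinity> else t < \<sigma> \<omega>}"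

text \<open>Effective horizon T_e = T min inf{0 \<le> t < T : P(D_(t+1) | F_t) = 0}, inf of
  the empty set being infinity (the version of the conditional probability is
  the one given by real_cond_exp).\<close>
definition eff_horizon ::
  "'a measure \<Rightarrow> (enat \<Rightarrow> 'a measure) \<Rightarrow> ('a \<Rightarrow> enat) \<Rightarrow> enat \<Rightarrow> 'a \<Rightarrow> enat" where
  "eff_horizon M F \<sigma> T \<omega> =
     min T (Inf {enat t | t. enat t < T \<and>
        real_cond_exp M (F (enat t)) (indicator (Dset M \<sigma> (enat (Suc t)))) \<omega> = 0})"

definition stopped :: "('a \<Rightarrow> enat) \<Rightarrow> (enat \<Rightarrow> 'a \<Rightarrow> real) \<Rightarrow> enat \<Rightarrow> 'a \<Rightarrow> real" where
  "stopped \<tau> X t \<omega> = X (min t (\<tau> \<omega>)) \<omega>"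

end

theory Submission
  imports Defs
begin


lemma sfs:
  assumes "prob_space M" "subalgebra M F"
  shows "sigma_finite_subalgebra M F"
proof -
  interpret prob_space M by fact
  have "finite_measure_subalgebra M F"
    by unfold_locales (fact assms(2))
  then show ?thesis by (rule finite_measure_subalgebra_is_sigma_finite)
qed

lemma filt_sub:
  assumes "filtration_on M F I" "t \<in> I"
  shows "subalgebra M (F t)"
  using assms unfolding filtration_on_def by auto

lemma filt_sub2:
  assumes "filtration_on M F I" "s \<in> I" "t \<in> I" "s \<le> t"
  shows "subalgebra (F t) (F s)"
  using assms unfolding filtration_on_def subalgebra_def by auto

lemma super_tower:
  assumes P: "prob_space M" and filt: "filtration_on M F I" and X: "supermartingale_on M F I X"
    and I: "t \<in> I" "t1 \<in> I" "u \<in> I" "t \<le> t1" "t1 \<le> u"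
  shows "AE \<omega> in M. real_cond_exp M (F t) (X u) \<omega> \<le> real_cond_exp M (F t) (X t1) \<omega>"
proof -
  have sub1: "subalgebra M (F t1)" using filt_sub[OF filt I(2)] .
  have sub10: "subalgebra (F t1) (F t)" using filt_sub2[OF filt I(1,2,4)] .
  interpret sigma_finite_subalgebra M "F t" using sfs[OF P filt_sub[OF filt I(1)]] .
  have intu: "integrable M (X u)" and int1: "integrable M (X t1)"
    using X I unfolding supermartingale_on_def by auto
  have A: "AE \<omega> in M. real_cond_exp M (F t) (real_cond_exp M (F t1) (X u)) \<omega> = real_cond_exp M (F t) (X u) \<omega>"
    by (rule real_cond_exp_nested_subalg[OF sub1 sub10 intu])
  have "AE \<omega> in M. real_cond_exp M (F t1) (X u) \<omega> \<le> X t1 \<omega>"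
    using X I unfolding supermartingale_on_def by auto
  then have B: "AE \<omega> in M. real_cond_exp M (F t) (real_cond_exp M (F t1) (X u)) \<omega> \<le> real_cond_exp M (F t) (X t1) \<omega>"
    by (rule real_cond_exp_mono)
       (auto intro: sigma_finite_subalgebra.real_cond_exp_int(1)[OF sfs[OF P sub1] intu] int1)
  from A B show ?thesis by eventually_elim auto
qed

lemma cond_exp_local:
  assumes sf: "sigma_finite_subalgebra M F" and f: "integrable M f" and g: "integrable M g"
    and A: "A \<in> sets F" and eq: "\<forall>\<omega>\<in>A. f \<omega> = g \<omega>"
  shows "AE \<omega> in M. \<omega> \<in> A \<longrightarrow> real_cond_exp M F f \<omega> = real_cond_exp M F g \<omega>"
proof -
  interpret sigma_finite_subalgebra M F by fact
  have 1: "AE \<omega> in M. real_cond_exp M F (\<lambda>x. f x - g x) \<omega> = real_cond_exp M F f \<omega> - real_cond_exp M F g \<omega>"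
    using real_cond_exp_diff[OF f g] .
  have ind: "(\<lambda>x. 1 - indicator A x :: real) \<in> borel_measurable F" using A by measurable
  have eqfun: "(\<lambda>x. f x - g x) = (\<lambda>x. (1 - indicator A x) * (f x - g x))"
    using eq by (auto simp: indicator_def fun_eq_iff)
  have fgm: "(\<lambda>x. f x - g x) \<in> borel_measurable M" using f g by measurable
  have fgi: "integrable M (\<lambda>x. (1 - indicator A x) * (f x - g x))"
    using f g by (subst eqfun[symmetric]) auto
  have 2: "AE \<omega> in M. real_cond_exp M F (\<lambda>x. (1 - indicator A x) * (f x - g x)) \<omega> = (1 - indicator A \<omega>) * real_cond_exp M F (\<lambda>x. f x - g x) \<omega>"
    by (rule real_cond_exp_mult[OF ind fgm fgi])
  from 1 2 show ?thesis unfolding eqfun[symmetric] by eventually_elim (auto simp: indicator_def)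
qed

lemma super_modify:
  assumes P: "prob_space M" and filt: "filtration_on M F I" and X: "supermartingale_on M F I X"
    and tI: "t \<in> I"
    and Ym: "Y \<in> borel_measurable (F t)" and Yi: "integrable M Y"
    and YX: "AE \<omega> in M. Y \<omega> \<le> X t \<omega>"
    and Yf: "\<forall>u\<in>I. t < u \<longrightarrow> (AE \<omega> in M. real_cond_exp M (F t) (X u) \<omega> \<le> Y \<omega>)"
  shows "supermartingale_on M F I (X(t := Y))"
proof -
  have ad: "adapted_on F I (X(t := Y))"
    using X Ym unfolding supermartingale_on_def adapted_on_def by auto
  have it: "\<forall>u\<in>I. integrable M ((X(t := Y)) u)"
    using X Yi unfolding supermartingale_on_def by auto
  have "AE \<omega> in M. real_cond_exp M (F s) ((X(t := Y)) u) \<omega> \<le> (X(t := Y)) s \<omega>"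
    if s: "s \<in> I" "u \<in> I" "s \<le> u" for s u
  proof -
    interpret sigma_finite_subalgebra M "F s" using sfs[OF P filt_sub[OF filt s(1)]] .
    consider "s = t" "u = t" | "s \<noteq> t" "u = t" | "s = t" "u \<noteq> t" | "s \<noteq> t" "u \<noteq> t" by blast
    then show ?thesis
    proof cases
      case 1
      then show ?thesis using real_cond_exp_F_meas[OF Yi] Ym by auto
    next
      case 2
      have "AE \<omega> in M. real_cond_exp M (F s) Y \<omega> \<le> real_cond_exp M (F s) (X t) \<omega>"
        by (rule real_cond_exp_mono[OF YX Yi]) (use X tI in \<open>auto simp: supermartingale_on_def\<close>)
      moreover have "AE \<omega> in M. real_cond_exp M (F s) (X t) \<omega> \<le> X s \<omega>"
        using X s 2 unfolding supermartingale_on_def by auto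
      ultimately have "AE \<omega> in M. real_cond_exp M (F s) Y \<omega> \<le> X s \<omega>" by eventually_elim auto
      then show ?thesis using 2 by auto
    next
      case 3
      then show ?thesis using Yf s by auto
    next
      case 4
      then show ?thesis using X s unfolding supermartingale_on_def by auto
    qed
  qed
  then show ?thesis using ad it unfolding supermartingale_on_def by blast
qed

lemma enat_less_Inf_iff:
  fixes Z :: "enat set"
  shows "enat a < Inf Z \<longleftrightarrow> (\<forall>z\<in>Z. enat a < z)"
proof
  assume "enat a < Inf Z" then show "\<forall>z\<in>Z. enat a < z" using Inf_lower order_less_le_trans by blast
next
  assume H: "\<forall>z\<in>Z. enat a < z"
  show "enat a < Inf Z"
  proof (cases "Z = {}")
    case True then show ?thesis by (simp add: Inf_enat_def)
  next
    case False
    then obtain z where "z \<in> Z" by blast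
    then have "Inf Z \<in> Z" unfolding Inf_enat_def using False by (auto intro: LeastI)
    then show ?thesis using H by blast
  qed
qed

lemma Te_less:
  assumes "enat n < T"
  shows "(enat n < eff_horizon M F \<sigma> T \<omega>) \<longleftrightarrow>
    (\<forall>s\<le>n. real_cond_exp M (F (enat s)) (indicator (Dset M \<sigma> (enat (Suc s)))) \<omega> \<noteq> 0)"
proof -
  have "enat n < eff_horizon M F \<sigma> T \<omega> \<longleftrightarrow>
     (\<forall>z\<in>{enat t | t. enat t < T \<and>
        real_cond_exp M (F (enat t)) (indicator (Dset M \<sigma> (enat (Suc t)))) \<omega> = 0}. enat n < z)"
    unfolding eff_horizon_def using assms by (simp add: enat_less_Inf_iff)
  also have "\<dots> \<longleftrightarrow> (\<forall>s\<le>n. real_cond_exp M (F (enat s)) (indicator (Dset M \<sigma> (enat (Suc s)))) \<omega> \<noteq> 0)" using assms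
  proof (auto simp: not_le[symmetric])
    fix s assume H: "\<forall>z. (\<exists>t. z = enat t \<and> \<not> T \<le> enat t \<and>
       real_cond_exp M (F (enat t)) (indicat_real (Dset M \<sigma> (enat (Suc t)))) \<omega> = 0) \<longrightarrow> \<not> z \<le> enat n"
      and s: "s \<le> n" and z: "real_cond_exp M (F (enat s)) (indicat_real (Dset M \<sigma> (enat (Suc s)))) \<omega> = 0"
    have "\<not> T \<le> enat s" using s assms
      by (metis enat_ord_simps(1) le_less_trans not_le)
    then show False using H[rule_format, of "enat s"] s z by auto
  qed
  finally show ?thesis .
qed

lemma eff_le: "eff_horizon M F \<sigma> T \<omega> \<le> T"
  by (simp add: eff_horizon_def)

lemma Te_meas:
  assumes filt: "filtration_on M F I" and tI: "enat n \<in> I" and Iall: "\<forall>s\<le>n. enat s \<in> I"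
    and nT: "enat n < T"
  shows "{\<omega>\<in>space M. enat n < eff_horizon M F \<sigma> T \<omega>} \<in> sets (F (enat n))"
proof -
  let ?ce = "\<lambda>s. real_cond_exp M (F (enat s)) (indicator (Dset M \<sigma> (enat (Suc s))))"
  have spt: "space (F (enat n)) = space M" using filt_sub[OF filt tI] by (simp add: subalgebra_def)
  have m: "?ce s \<in> borel_measurable (F (enat n))" if "s \<le> n" for s
  proof -
    have "subalgebra (F (enat n)) (F (enat s))"
      by (rule filt_sub2[OF filt]) (use Iall that tI in auto)
    then show ?thesis by (rule measurable_from_subalg) simp
  qed
  have "(\<Inter>s\<in>{..n}. {\<omega>\<in>space (F (enat n)). ?ce s \<omega> \<noteq> 0}) \<in> sets (F (enat n))"
  proof (intro sets.finite_INT)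
    fix s assume "s \<in> {..n}"
    then have [measurable]: "?ce s \<in> borel_measurable (F (enat n))" using m by auto
    show "{\<omega>\<in>space (F (enat n)). ?ce s \<omega> \<noteq> 0} \<in> sets (F (enat n))" by measurable
  qed auto
  moreover have "(\<Inter>s\<in>{..n}. {\<omega>\<in>space (F (enat n)). ?ce s \<omega> \<noteq> 0}) = {\<omega>\<in>space M. enat n < eff_horizon M F \<sigma> T \<omega>}"
    using Te_less[OF nT, of M F \<sigma>] spt by auto
  ultimately show ?thesis by simp
qed



theorem lemma6p2:
  fixes M :: "'a measure" and F :: "enat \<Rightarrow> 'a measure" and T :: enat
    and \<sigma> :: "'a \<Rightarrow> enat" and G V S :: "enat \<Rightarrow> 'a \<Rightarrow> real"
  assumes prob: "prob_space M"
    and filt: "filtration_on M F (time_set_T T)"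
    and F0: "sets (F 0) = {{}, space M}"
    and stop: "\<forall>t\<in>time_set T. {\<omega> \<in> space M. \<sigma> \<omega> \<le> t} \<in> sets (F t)"
    and sigma_pos: "AE \<omega> in M. 0 < \<sigma> \<omega>"
    and G_adapt: "adapted_on F (time_set_T T) G"
    and G_int: "(\<integral>\<^sup>+\<omega>. (SUP t\<in>time_set_T T. ennreal (\<bar>G t \<omega>\<bar> * indicator (Dset M \<sigma> t) \<omega>)) \<partial>M) < \<infinity>"
    and G_inf: "T = \<infinity> \<Longrightarrow> \<forall>\<omega>\<in>Dset M \<sigma> \<infinity>.
                  ereal (G \<infinity> \<omega>) = limsup (\<lambda>n. ereal (G (enat n) \<omega>))"
    \<comment> \<open>(i)\<close>
    and S_pos: "\<forall>t\<in>time_set T. AE \<omega> in M. \<omega> \<in> Dset M \<sigma> t \<longrightarrow> 0 < S t \<omega> \<and> S t \<omega> \<le> 1"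
    and S_zero: "\<forall>t\<in>time_set T. AE \<omega> in M. \<omega> \<notin> Dset M \<sigma> t \<longrightarrow> S t \<omega> = 0"
    and V_eq: "\<forall>t\<in>time_set T. AE \<omega> in M.
                 \<omega> \<in> Dset M \<sigma> t \<and> eff_horizon M F \<sigma> T \<omega> \<le> t \<longrightarrow> V t \<omega> = G t \<omega>"
    \<comment> \<open>(ii)\<close>
    and V_adapt: "adapted_on F (time_set T) V"
    and V_dom: "\<forall>t\<in>time_set T. AE \<omega> in M. \<omega> \<in> Dset M \<sigma> t \<longrightarrow> G t \<omega> \<le> V t \<omega>"
    and V_sup: "supermartingale_on M F (time_set T)
                  (stopped (eff_horizon M F \<sigma> T) (\<lambda>t \<omega>. S t \<omega> * V t \<omega>))"
    and V_min: "\<forall>W. adapted_on F (time_set T) W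
                  \<and> (\<forall>t\<in>time_set T. AE \<omega> in M. \<omega> \<in> Dset M \<sigma> t \<longrightarrow> G t \<omega> \<le> W t \<omega>)
                  \<and> supermartingale_on M F (time_set T)
                      (stopped (eff_horizon M F \<sigma> T) (\<lambda>t \<omega>. S t \<omega> * W t \<omega>))
                  \<longrightarrow> (\<forall>t\<in>time_set T. AE \<omega> in M. \<omega> \<in> Dset M \<sigma> t \<longrightarrow> V t \<omega> \<le> W t \<omega>)"
    \<comment> \<open>(iii)\<close>
    and S_sup: "supermartingale_on M F (time_set_T T) S"
    and S_nonneg: "\<forall>t\<in>time_set_T T. AE \<omega> in M. 0 \<le> S t \<omega>"
    and S_one: "\<forall>t\<in>time_set T. AE \<omega> in M.
                  \<omega> \<in> Dset M \<sigma> t \<and> V t \<omega> = G t \<omega> \<longrightarrow> S t \<omega> = 1"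
    and S_inf: "T = \<infinity> \<Longrightarrow> AE \<omega> in M. S \<infinity> \<omega> = indicator (Dset M \<sigma> \<infinity>) \<omega>"
    and S_min: "\<forall>R. supermartingale_on M F (time_set_T T) R
                  \<and> (\<forall>t\<in>time_set_T T. AE \<omega> in M. 0 \<le> R t \<omega>)
                  \<and> (\<forall>t\<in>time_set T. AE \<omega> in M.
                        \<omega> \<in> Dset M \<sigma> t \<and> V t \<omega> = G t \<omega> \<longrightarrow> R t \<omega> = 1)
                  \<and> (T = \<infinity> \<longrightarrow> (AE \<omega> in M. R \<infinity> \<omega> = indicator (Dset M \<sigma> \<infinity>) \<omega>))
                  \<longrightarrow> (\<forall>t\<in>time_set_T T. AE \<omega> in M. S t \<omega> \<le> R t \<omega>)"
  shows "\<forall>t\<in>time_set T. AE \<omega> in M.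
           t < eff_horizon M F \<sigma> T \<omega> \<and> \<omega> \<in> Dset M \<sigma> t \<and> G t \<omega> < V t \<omega> \<longrightarrow>
             S t \<omega> = real_cond_exp M (F t) (S (t + 1)) \<omega> \<and>
             S t \<omega> * V t \<omega> = real_cond_exp M (F t) (\<lambda>x. S (t + 1) x * V (t + 1) x) \<omega>"
proof (intro ballI)
  fix t assume tI: "t \<in> time_set T"
  let ?Te = "eff_horizon M F \<sigma> T"
  show "AE \<omega> in M.
           t < ?Te \<omega> \<and> \<omega> \<in> Dset M \<sigma> t \<and> G t \<omega> < V t \<omega> \<longrightarrow>
             S t \<omega> = real_cond_exp M (F t) (S (t + 1)) \<omega> \<and>
             S t \<omega> * V t \<omega> = real_cond_exp M (F t) (\<lambda>x. S (t + 1) x * V (t + 1) x) \<omega>"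
  proof (cases "t < T")
    case False
    have "\<forall>\<omega>. \<not> t < ?Te \<omega>" using False eff_le[of M F \<sigma> T] by (metis order_less_le_trans)
    then show ?thesis by (auto intro!: AE_I2)
  next
    case True
    obtain n where tn: "t = enat n" using tI by (cases t) (auto simp: time_set_def)
    define t1 where "t1 = enat (Suc n)"
    have tp1: "t + 1 = t1" by (simp add: tn t1_def one_enat_def)
    have t1T: "t1 \<le> T" using True by (simp add: tn t1_def Suc_ile_eq)
    have t1I: "t1 \<in> time_set T" "t1 \<in> time_set_T T" using t1T by (auto simp: time_set_def time_set_T_def t1_def)
    have tIT: "t \<in> time_set_T T" using tI by (auto simp: time_set_def time_set_T_def)
    have tt1: "t \<le> t1" "t < t1" by (auto simp: tn t1_def)
    have nxt: "\<And>x. t < x \<Longrightarrow> t1 \<le> x" by (simp add: tn t1_def Suc_ile_eq)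
    have filt2: "filtration_on M F (time_set T)"
      using filt unfolding filtration_on_def time_set_def time_set_T_def by auto
    have subt: "subalgebra M (F t)" using filt_sub[OF filt tIT] .
    have sub1: "subalgebra M (F t1)" using filt_sub[OF filt t1I(2)] .
    have spt: "space (F t) = space M" using subt by (simp add: subalgebra_def)
    have sft: "sigma_finite_subalgebra M (F t)" using sfs[OF prob subt] .
    have Sm [measurable]: "S t \<in> borel_measurable (F t)" "S t1 \<in> borel_measurable (F t1)"
      using S_sup tIT t1I unfolding supermartingale_on_def adapted_on_def by auto
    have Vm [measurable]: "V t \<in> borel_measurable (F t)" "V t1 \<in> borel_measurable (F t1)"
      using V_adapt tI t1I unfolding adapted_on_def by auto
    have Gm [measurable]: "G t \<in> borel_measurable (F t)" "G t1 \<in> borel_measurable (F t1)"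
      using G_adapt tIT t1I unfolding adapted_on_def by auto
    have SmM [measurable]: "S t \<in> borel_measurable M" "S t1 \<in> borel_measurable M"
      using measurable_from_subalg[OF subt Sm(1)] measurable_from_subalg[OF sub1 Sm(2)] by auto
    have VmM [measurable]: "V t \<in> borel_measurable M" "V t1 \<in> borel_measurable M"
      using measurable_from_subalg[OF subt Vm(1)] measurable_from_subalg[OF sub1 Vm(2)] by auto
    have GmM [measurable]: "G t \<in> borel_measurable M" "G t1 \<in> borel_measurable M"
      using measurable_from_subalg[OF subt Gm(1)] measurable_from_subalg[OF sub1 Gm(2)] by auto
    have Si: "integrable M (S t)" "integrable M (S t1)"
      using S_sup tIT t1I unfolding supermartingale_on_def by auto

    have claim1: "AE \<omega> in M. V t \<omega> \<noteq> G t \<omega> \<longrightarrow> S t \<omega> = real_cond_exp M (F t) (S t1) \<omega>"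
    proof -
      define ce where "ce = real_cond_exp M (F t) (S t1)"
      define Y where "Y = (\<lambda>\<omega>. if V t \<omega> = G t \<omega> then S t \<omega> else ce \<omega>)"
      have cem [measurable]: "ce \<in> borel_measurable (F t)" unfolding ce_def by simp
      have Ym: "Y \<in> borel_measurable (F t)" unfolding Y_def by measurable
      have YmM: "Y \<in> borel_measurable M" by (rule measurable_from_subalg[OF subt Ym])
      have cei: "integrable M ce" unfolding ce_def
        by (rule sigma_finite_subalgebra.real_cond_exp_int(1)[OF sft Si(2)])
      have Yi: "integrable M Y"
      proof (rule Bochner_Integration.integrable_bound)
        show "integrable M (\<lambda>\<omega>. \<bar>S t \<omega>\<bar> + \<bar>ce \<omega>\<bar>)" using Si cei by auto
        show "Y \<in> borel_measurable M" by (rule YmM)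
        show "AE \<omega> in M. norm (Y \<omega>) \<le> norm (\<bar>S t \<omega>\<bar> + \<bar>ce \<omega>\<bar>)" by (auto simp: Y_def)
      qed
      have ceS: "AE \<omega> in M. ce \<omega> \<le> S t \<omega>"
        using S_sup tIT t1I tt1 unfolding supermartingale_on_def ce_def by auto
      have YX: "AE \<omega> in M. Y \<omega> \<le> S t \<omega>" using ceS by eventually_elim (auto simp: Y_def)
      have Yf: "\<forall>u\<in>time_set_T T. t < u \<longrightarrow> (AE \<omega> in M. real_cond_exp M (F t) (S u) \<omega> \<le> Y \<omega>)"
      proof (intro ballI impI)
        fix u assume u: "u \<in> time_set_T T" "t < u"
        have A: "AE \<omega> in M. real_cond_exp M (F t) (S u) \<omega> \<le> ce \<omega>" unfolding ce_def
          by (rule super_tower[OF prob filt S_sup tIT t1I(2) u(1) tt1(1) nxt[OF u(2)]])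
        have B: "AE \<omega> in M. real_cond_exp M (F t) (S u) \<omega> \<le> S t \<omega>"
          using S_sup u tIT unfolding supermartingale_on_def by auto
        from A B show "AE \<omega> in M. real_cond_exp M (F t) (S u) \<omega> \<le> Y \<omega>"
          by eventually_elim (auto simp: Y_def)
      qed
      have Rsup: "supermartingale_on M F (time_set_T T) (S(t := Y))"
        by (rule super_modify[OF prob filt S_sup tIT Ym Yi YX Yf])
      have Rnn: "\<forall>u\<in>time_set_T T. AE \<omega> in M. 0 \<le> (S(t:=Y)) u \<omega>"
      proof
        fix u assume u: "u \<in> time_set_T T"
        show "AE \<omega> in M. 0 \<le> (S(t:=Y)) u \<omega>"
        proof (cases "u = t")
          case True
          have "AE \<omega> in M. 0 \<le> ce \<omega>" unfolding ce_def
            by (rule sigma_finite_subalgebra.real_cond_exp_pos[OF sft]) (use S_nonneg t1I(2) in auto)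
          moreover have "AE \<omega> in M. 0 \<le> S t \<omega>" using S_nonneg tIT by auto
          ultimately have "AE \<omega> in M. 0 \<le> Y \<omega>" by eventually_elim (auto simp: Y_def)
          then show ?thesis using True by simp
        next
          case False then show ?thesis using S_nonneg u by auto
        qed
      qed
      have Rone: "\<forall>u\<in>time_set T. AE \<omega> in M. \<omega> \<in> Dset M \<sigma> u \<and> V u \<omega> = G u \<omega> \<longrightarrow> (S(t:=Y)) u \<omega> = 1"
      proof
        fix u assume u: "u \<in> time_set T"
        show "AE \<omega> in M. \<omega> \<in> Dset M \<sigma> u \<and> V u \<omega> = G u \<omega> \<longrightarrow> (S(t:=Y)) u \<omega> = 1"
        proof (cases "u = t")
          case True
          have "AE \<omega> in M. \<omega> \<in> Dset M \<sigma> t \<and> V t \<omega> = G t \<omega> \<longrightarrow> Y \<omega> = 1"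
            using S_one tI by (auto simp: Y_def)
          then show ?thesis using True by simp
        next
          case False then show ?thesis using S_one u by auto
        qed
      qed
      have Rinf: "T = \<infinity> \<longrightarrow> (AE \<omega> in M. (S(t:=Y)) \<infinity> \<omega> = indicator (Dset M \<sigma> \<infinity>) \<omega>)"
        using S_inf tn by auto
      have "\<forall>u\<in>time_set_T T. AE \<omega> in M. S u \<omega> \<le> (S(t:=Y)) u \<omega>"
        using S_min Rsup Rnn Rone Rinf by blast
      then have "AE \<omega> in M. S t \<omega> \<le> Y \<omega>" using tIT by auto
      with ceS show ?thesis by eventually_elim (auto simp: Y_def ce_def)
    qed
    have claim2: "AE \<omega> in M. t < ?Te \<omega> \<and> \<omega> \<in> Dset M \<sigma> t \<and> G t \<omega> < V t \<omega> \<longrightarrow>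
        S t \<omega> * V t \<omega> = real_cond_exp M (F t) (\<lambda>x. S t1 x * V t1 x) \<omega>"
    proof -
      define X where "X = stopped ?Te (\<lambda>s \<omega>. S s \<omega> * V s \<omega>)"
      define c where "c = real_cond_exp M (F t) (X t1)"
      have Xsup: "supermartingale_on M F (time_set T) X" using V_sup unfolding X_def .
      have Xm [measurable]: "X t \<in> borel_measurable (F t)"
        using Xsup tI unfolding supermartingale_on_def adapted_on_def by auto
      have Xi: "integrable M (X t)" "integrable M (X t1)"
        using Xsup tI t1I unfolding supermartingale_on_def by auto
      have cm [measurable]: "c \<in> borel_measurable (F t)" unfolding c_def by simp
      have ci: "integrable M c" unfolding c_def
        by (rule sigma_finite_subalgebra.real_cond_exp_int(1)[OF sft Xi(2)])
      define Ate where "Ate = {\<omega>\<in>space M. t < ?Te \<omega>}"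
      have Ate: "Ate \<in> sets (F t)" unfolding Ate_def tn
        by (rule Te_meas[OF filt]) (use tIT True in \<open>auto simp: tn time_set_T_def intro: order_trans[of _ "enat n"]\<close>)
      have Dt_eq: "Dset M \<sigma> t = space (F t) - {\<omega>\<in>space M. \<sigma> \<omega> \<le> t}"
        using spt tn by (auto simp: Dset_def not_le)
      have Dt: "Dset M \<sigma> t \<in> sets (F t)" unfolding Dt_eq using stop tI by auto
      define B where "B = Ate \<inter> Dset M \<sigma> t \<inter> {\<omega>\<in>space M. 0 < S t \<omega> \<and> G t \<omega> < V t \<omega> \<and> c \<omega> < S t \<omega> * V t \<omega>}"
      have "{\<omega>\<in>space (F t). 0 < S t \<omega> \<and> G t \<omega> < V t \<omega> \<and> c \<omega> < S t \<omega> * V t \<omega>} \<in> sets (F t)"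
        by measurable
      then have B [measurable]: "B \<in> sets (F t)" unfolding B_def using Ate Dt spt by auto
      have BA: "\<And>\<omega>. \<omega> \<in> B \<Longrightarrow> t < ?Te \<omega> \<and> \<omega> \<in> Dset M \<sigma> t \<and> \<omega> \<in> space M \<and> 0 < S t \<omega> \<and> G t \<omega> < V t \<omega> \<and> c \<omega> < S t \<omega> * V t \<omega>"
        unfolding B_def Ate_def by auto
      have Xt_eq: "\<And>\<omega>. t < ?Te \<omega> \<Longrightarrow> X t \<omega> = S t \<omega> * V t \<omega>"
        by (simp add: X_def stopped_def min_absorb1 less_imp_le)
      have Xt1_eq: "\<And>\<omega>. t < ?Te \<omega> \<Longrightarrow> X t1 \<omega> = S t1 \<omega> * V t1 \<omega>"
        using nxt by (simp add: X_def stopped_def min_absorb1)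
      define W where "W = V(t := (\<lambda>\<omega>. if \<omega> \<in> B then max (G t \<omega>) (c \<omega> / S t \<omega>) else V t \<omega>))"
      define Y where "Y = (\<lambda>\<omega>. if \<omega> \<in> B then S t \<omega> * max (G t \<omega>) (c \<omega> / S t \<omega>) else X t \<omega>)"
      have stopW: "stopped ?Te (\<lambda>s \<omega>. S s \<omega> * W s \<omega>) = X(t := Y)"
      proof (intro ext)
        fix u \<omega>
        show "stopped ?Te (\<lambda>s \<omega>. S s \<omega> * W s \<omega>) u \<omega> = (X(t := Y)) u \<omega>"
        proof (cases "\<omega> \<in> B")
          case False
          then show ?thesis by (auto simp: stopped_def X_def W_def Y_def)
        next
          case True
          then have lt: "t < ?Te \<omega>" using BA by blast
          show ?thesis
          proof (cases "u = t")
            case True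
            then show ?thesis using lt \<open>\<omega> \<in> B\<close> by (auto simp: stopped_def X_def W_def Y_def min_def)
          next
            case False
            then have "min u (?Te \<omega>) \<noteq> t" using lt by (auto simp: min_def)
            then show ?thesis using False by (auto simp: stopped_def X_def W_def Y_def)
          qed
        qed
      qed
      have Ym: "Y \<in> borel_measurable (F t)" unfolding Y_def by measurable
      have YmM: "Y \<in> borel_measurable M" by (rule measurable_from_subalg[OF subt Ym])
      have Spos: "AE \<omega> in M. \<omega> \<in> Dset M \<sigma> t \<longrightarrow> 0 < S t \<omega> \<and> S t \<omega> \<le> 1" using S_pos tI by auto
      have Gdom: "AE \<omega> in M. \<omega> \<in> Dset M \<sigma> t \<longrightarrow> G t \<omega> \<le> V t \<omega>" using V_dom tI by auto
      have cX: "AE \<omega> in M. c \<omega> \<le> X t \<omega>"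
        using Xsup tI t1I tt1 unfolding supermartingale_on_def c_def by auto
      have key: "c \<omega> / S t \<omega> < V t \<omega>" if "\<omega> \<in> B" for \<omega>
      proof -
        have "0 < S t \<omega>" "c \<omega> < S t \<omega> * V t \<omega>" using BA[OF that] by auto
        then show ?thesis by (simp add: divide_less_eq mult.commute)
      qed
      have Ybounds: "AE \<omega> in M. \<omega> \<in> B \<longrightarrow> c \<omega> \<le> Y \<omega> \<and> Y \<omega> \<le> X t \<omega>"
        using Gdom
      proof eventually_elim
        case (elim \<omega>)
        show ?case
        proof
          assume b: "\<omega> \<in> B"
          then have s0: "0 < S t \<omega>" and d: "\<omega> \<in> Dset M \<sigma> t" and lt: "t < ?Te \<omega>" using BA by auto
          have gv: "G t \<omega> \<le> V t \<omega>" using elim d by auto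
          have h2: "S t \<omega> * (c \<omega> / S t \<omega>) = c \<omega>" using s0 by simp
          have "S t \<omega> * (c \<omega> / S t \<omega>) \<le> S t \<omega> * max (G t \<omega>) (c \<omega> / S t \<omega>)"
            using s0 by (intro mult_left_mono) auto
          moreover have "S t \<omega> * max (G t \<omega>) (c \<omega> / S t \<omega>) \<le> S t \<omega> * V t \<omega>"
            using s0 gv key[OF b] by (intro mult_left_mono) auto
          ultimately show "c \<omega> \<le> Y \<omega> \<and> Y \<omega> \<le> X t \<omega>"
            using b h2 Xt_eq[OF lt] by (simp add: Y_def)
        qed
      qed
      have YX: "AE \<omega> in M. Y \<omega> \<le> X t \<omega>" using Ybounds by eventually_elim (auto simp: Y_def)
      have Yi: "integrable M Y"
      proof (rule Bochner_Integration.integrable_bound)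
        show "integrable M (\<lambda>\<omega>. \<bar>c \<omega>\<bar> + \<bar>X t \<omega>\<bar>)" using ci Xi by auto
        show "Y \<in> borel_measurable M" by (rule YmM)
        show "AE \<omega> in M. norm (Y \<omega>) \<le> norm (\<bar>c \<omega>\<bar> + \<bar>X t \<omega>\<bar>)"
          using Ybounds by eventually_elim (auto simp: Y_def abs_if split: if_splits)
      qed
      have Yf: "\<forall>u\<in>time_set T. t < u \<longrightarrow> (AE \<omega> in M. real_cond_exp M (F t) (X u) \<omega> \<le> Y \<omega>)"
      proof (intro ballI impI)
        fix u assume u: "u \<in> time_set T" "t < u"
        have A: "AE \<omega> in M. real_cond_exp M (F t) (X u) \<omega> \<le> c \<omega>" unfolding c_def
          by (rule super_tower[OF prob filt2 Xsup tI t1I(1) u(1) tt1(1) nxt[OF u(2)]])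
        have B': "AE \<omega> in M. real_cond_exp M (F t) (X u) \<omega> \<le> X t \<omega>"
          using Xsup u tI unfolding supermartingale_on_def by auto
        from A B' Ybounds show "AE \<omega> in M. real_cond_exp M (F t) (X u) \<omega> \<le> Y \<omega>"
          by eventually_elim (auto simp: Y_def)
      qed
      have Wsup: "supermartingale_on M F (time_set T) (stopped ?Te (\<lambda>s \<omega>. S s \<omega> * W s \<omega>))"
        unfolding stopW by (rule super_modify[OF prob filt2 Xsup tI Ym Yi YX Yf])
      have "(\<lambda>\<omega>. if \<omega> \<in> B then max (G t \<omega>) (c \<omega> / S t \<omega>) else V t \<omega>) \<in> borel_measurable (F t)"
        by measurable
      then have Wad: "adapted_on F (time_set T) W" using V_adapt by (auto simp: adapted_on_def W_def)
      have Wdom: "\<forall>u\<in>time_set T. AE \<omega> in M. \<omega> \<in> Dset M \<sigma> u \<longrightarrow> G u \<omega> \<le> W u \<omega>"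
      proof
        fix u assume u: "u \<in> time_set T"
        show "AE \<omega> in M. \<omega> \<in> Dset M \<sigma> u \<longrightarrow> G u \<omega> \<le> W u \<omega>"
        proof (cases "u = t")
          case True
          have "AE \<omega> in M. \<omega> \<in> Dset M \<sigma> t \<longrightarrow> G t \<omega> \<le> W t \<omega>"
            using Gdom by eventually_elim (auto simp: W_def)
          then show ?thesis using True by simp
        next
          case False then show ?thesis using V_dom u by (auto simp: W_def)
        qed
      qed
      have "\<forall>u\<in>time_set T. AE \<omega> in M. \<omega> \<in> Dset M \<sigma> u \<longrightarrow> V u \<omega> \<le> W u \<omega>"
        using V_min Wad Wdom Wsup by blast
      then have VW: "AE \<omega> in M. \<omega> \<in> Dset M \<sigma> t \<longrightarrow> V t \<omega> \<le> W t \<omega>" using tI by auto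
      have notB: "AE \<omega> in M. \<omega> \<notin> B" using VW
      proof eventually_elim
        case (elim \<omega>)
        show ?case
        proof
          assume b: "\<omega> \<in> B"
          then have "V t \<omega> \<le> max (G t \<omega>) (c \<omega> / S t \<omega>)" using elim BA by (auto simp: W_def)
          then show False using key[OF b] BA[OF b] by auto
        qed
      qed
      have ceq: "AE \<omega> in M. t < ?Te \<omega> \<and> \<omega> \<in> Dset M \<sigma> t \<and> G t \<omega> < V t \<omega> \<longrightarrow> S t \<omega> * V t \<omega> = c \<omega>"
        using notB Spos cX
      proof eventually_elim
        case (elim \<omega>)
        show ?case
        proof
          assume h: "t < ?Te \<omega> \<and> \<omega> \<in> Dset M \<sigma> t \<and> G t \<omega> < V t \<omega>"
          then have "\<omega> \<in> space M" by (auto simp: Dset_def)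
          then have "\<omega> \<in> Ate" using h by (auto simp: Ate_def)
          then have "\<not> (c \<omega> < S t \<omega> * V t \<omega>)" using elim h \<open>\<omega> \<in> space M\<close> by (auto simp: B_def)
          then show "S t \<omega> * V t \<omega> = c \<omega>" using elim(3) Xt_eq h by auto
        qed
      qed
      have gi: "integrable M (\<lambda>x. S t1 x * V t1 x)"
      proof (rule Bochner_Integration.integrable_bound)
        have D1e: "Dset M \<sigma> t1 = space (F t1) - {\<omega>\<in>space M. \<sigma> \<omega> \<le> t1}"
          using sub1 by (auto simp: Dset_def not_le subalgebra_def t1_def)
        have "Dset M \<sigma> t1 \<in> sets (F t1)" unfolding D1e using stop t1I by auto
        then have D1 [measurable]: "Dset M \<sigma> t1 \<in> sets M" using sub1 by (auto simp: subalgebra_def)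
        have Gint: "integrable M (\<lambda>\<omega>. \<bar>G t1 \<omega>\<bar> * indicator (Dset M \<sigma> t1) \<omega>)"
        proof (rule integrableI_bounded)
          show "(\<lambda>\<omega>. \<bar>G t1 \<omega>\<bar> * indicator (Dset M \<sigma> t1) \<omega>) \<in> borel_measurable M" by measurable
          have "(\<integral>\<^sup>+\<omega>. ennreal (norm (\<bar>G t1 \<omega>\<bar> * indicator (Dset M \<sigma> t1) \<omega>)) \<partial>M)
              \<le> (\<integral>\<^sup>+\<omega>. (SUP t\<in>time_set_T T. ennreal (\<bar>G t \<omega>\<bar> * indicator (Dset M \<sigma> t) \<omega>)) \<partial>M)"
            by (rule nn_integral_mono, rule SUP_upper2[OF t1I(2)]) (simp add: abs_mult)
          then show "(\<integral>\<^sup>+\<omega>. ennreal (norm (\<bar>G t1 \<omega>\<bar> * indicator (Dset M \<sigma> t1) \<omega>)) \<partial>M) < \<infinity>"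
            using G_int by (rule le_less_trans)
        qed
        show "integrable M (\<lambda>\<omega>. \<bar>X t1 \<omega>\<bar> + \<bar>G t1 \<omega>\<bar> * indicator (Dset M \<sigma> t1) \<omega>)"
          using Xi(2) Gint by auto
        show "(\<lambda>x. S t1 x * V t1 x) \<in> borel_measurable M" by measurable
        have Sz1: "AE \<omega> in M. \<omega> \<notin> Dset M \<sigma> t1 \<longrightarrow> S t1 \<omega> = 0" using S_zero t1I by auto
        have Sp1: "AE \<omega> in M. \<omega> \<in> Dset M \<sigma> t1 \<longrightarrow> 0 < S t1 \<omega> \<and> S t1 \<omega> \<le> 1" using S_pos t1I by auto
        have Veq1: "AE \<omega> in M. \<omega> \<in> Dset M \<sigma> t1 \<and> ?Te \<omega> \<le> t1 \<longrightarrow> V t1 \<omega> = G t1 \<omega>" using V_eq t1I by auto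
        show "AE \<omega> in M. norm (S t1 \<omega> * V t1 \<omega>) \<le> norm (\<bar>X t1 \<omega>\<bar> + \<bar>G t1 \<omega>\<bar> * indicator (Dset M \<sigma> t1) \<omega>)"
          using Sz1 Sp1 Veq1
        proof eventually_elim
          case (elim \<omega>)
          show ?case
          proof (cases "\<omega> \<in> Dset M \<sigma> t1")
            case False
            then show ?thesis using elim by simp
          next
            case D: True
            show ?thesis
            proof (cases "t < ?Te \<omega>")
              case True
              then show ?thesis using Xt1_eq[OF True] D by simp
            next
              case False
              then have "?Te \<omega> \<le> t1" using tt1 by (meson not_less order_trans)
              then have vg: "V t1 \<omega> = G t1 \<omega>" using elim D by auto
              have s: "0 < S t1 \<omega>" "S t1 \<omega> \<le> 1" using elim D by auto
              have "\<bar>S t1 \<omega> * G t1 \<omega>\<bar> \<le> \<bar>G t1 \<omega>\<bar>"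
                using s by (simp add: abs_mult mult_left_le_one_le)
              then show ?thesis using vg D by simp
            qed
          qed
        qed
      qed
      have loc: "AE \<omega> in M. \<omega> \<in> Ate \<longrightarrow> c \<omega> = real_cond_exp M (F t) (\<lambda>x. S t1 x * V t1 x) \<omega>"
        unfolding c_def by (rule cond_exp_local[OF sft Xi(2) gi Ate]) (auto simp: Ate_def Xt1_eq)
      show ?thesis using ceq loc
        by eventually_elim (auto simp: Ate_def Dset_def)
    qed
    show ?thesis unfolding tp1 using claim1 claim2 by eventually_elim auto
  qed
qed

end
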